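(* Let $0<\alpha<1$, $\lambda \in \mathbb{R}$, $n \geq 1$, and let $E:\mathbb{R}^n \to \mathbb{R}$ be a differentiable error function. Define \[ E_{\ell_1}(x) = E(x) + \lambda \sum_{k=1}^{n} |x_k|, \qquad x=(x_1,\dots,x_n). \] Fix $j \in \{1,\dots,n\}$ and the coordinates $x_k$, $k\neq j$, and regard $E$ and $E_{\ell_1}$ as functions of the single variable $x_j$. Then for $a>0$ and $x_j>a$, \[ {^{\sigma}}D^{\alpha}_{a} E_{\ell_1}(x_j) = {^{\sigma}}D^{\alpha}_{a} E(x_j) + \lambda C_1(\alpha)(\alpha-1)\tanh\Big(\frac{a-x_j}{1-\alpha}\Big). \]
   Context: Let $C:(0,1]\to\mathbb{R}$ be a normalization function satisfying $C(\alpha)\Gamma(1-\alpha) \to \tfrac12$ as $\alpha \to 1^{-}$, and set $C_1(\alpha) = \frac{C(\alpha)}{\Gamma(2-\alpha)}$. For $0<\alpha<1$, a (weakly) differentiable function $f$ of one variable with derivative $f'$, and $t>a$, the left sigmoidal fractional derivative is \[ {^{\sigma}}D^{\alpha}_{a} f(t) = C_1(\alpha) \int_{a}^{t} f'(s)\, \operatorname{sech}^2\!\Big(\frac{s-t}{1-\alpha}\Big)\, ds. \] *)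

theory Defs
  imports "HOL-Analysis.Analysis"
begin

definition sech :: "real \<Rightarrow> real" where
  "sech x = 1 / cosh x"

definition C1 :: "(real \<Rightarrow> real) \<Rightarrow> real \<Rightarrow> real" where
  "C1 C \<alpha> = C \<alpha> / Gamma (2 - \<alpha>)"

definition sigmoidal_frac_deriv ::
  "(real \<Rightarrow> real) \<Rightarrow> real \<Rightarrow> real \<Rightarrow> (real \<Rightarrow> real) \<Rightarrow> real \<Rightarrow> real" where
  "sigmoidal_frac_deriv C \<alpha> a f t =
     C1 C \<alpha> * integral {a..t} (\<lambda>s. deriv f s * (sech ((s - t) / (1 - \<alpha>)))^2)"

definition coord_upd :: "real^'n \<Rightarrow> 'n \<Rightarrow> real \<Rightarrow> real^'n" where
  "coord_upd x j u = (\<chi> k. if k = j then u else x $ k)"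

definition E_l1 :: "real \<Rightarrow> (real^'n \<Rightarrow> real) \<Rightarrow> real^'n \<Rightarrow> real" where
  "E_l1 lam E y = E y + lam * (\<Sum>k\<in>UNIV. \<bar>y $ k\<bar>)"

end

theory Submission
  imports Defs
begin

lemma coord_upd_axis: "coord_upd x j u = x + (u - x $ j) *\<^sub>R axis j 1"
  by (simp add: coord_upd_def vec_eq_iff axis_def)

lemma coord_upd_diff: "(\<lambda>u. coord_upd x j u) differentiable (at s)"
  unfolding coord_upd_axis by (intro derivative_intros)

lemma sum_coord_upd:
  "(\<Sum>k\<in>UNIV. \<bar>coord_upd x j u $ k\<bar>) = \<bar>u\<bar> + (\<Sum>k\<in>UNIV - {j}. \<bar>x $ k\<bar>)"
proof -
  have "(\<Sum>k\<in>UNIV. \<bar>coord_upd x j u $ k\<bar>) = \<bar>coord_upd x j u $ j\<bar> + (\<Sum>k\<in>UNIV - {j}. \<bar>coord_upd x j u $ k\<bar>)"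
    by (rule sum.remove) auto
  also have "(\<Sum>k\<in>UNIV - {j}. \<bar>coord_upd x j u $ k\<bar>) = (\<Sum>k\<in>UNIV - {j}. \<bar>x $ k\<bar>)"
    by (rule sum.cong) (auto simp: coord_upd_def)
  finally show ?thesis by (simp add: coord_upd_def)
qed

lemma sech_tanh_deriv:
  assumes "0 < \<alpha>" "\<alpha> < 1"
  shows "((\<lambda>s. (1 - \<alpha>) * tanh ((s - t) / (1 - \<alpha>))) has_real_derivative
          (sech ((s - t) / (1 - \<alpha>)))^2) (at s within S)"
proof -
  define z where "z = (s - t) / (1 - \<alpha>)"
  have c: "cosh z \<noteq> 0" by (metis cosh_real_pos less_irrefl)
  have "((\<lambda>s. (1 - \<alpha>) * tanh ((s - t) / (1 - \<alpha>))) has_real_derivative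
          (1 - \<alpha>) * ((1 - tanh z ^ 2) * (1 / (1 - \<alpha>)))) (at s within S)"
    unfolding z_def using c[unfolded z_def]
    by (auto intro!: derivative_eq_intros)
  moreover have "(1 - \<alpha>) * ((1 - tanh z ^ 2) * (1 / (1 - \<alpha>))) = (sech z)^2"
  proof -
    have e: "cosh z ^ 2 - sinh z ^ 2 = 1" by (simp add: cosh_square_eq)
    have "1 - tanh z ^ 2 = (cosh z ^ 2 - sinh z ^ 2) / cosh z ^ 2"
      using c by (simp add: tanh_def field_simps)
    then show ?thesis using assms e by (simp add: sech_def power_divide)
  qed
  ultimately show ?thesis by (simp add: z_def)
qed

theorem theorem2p4:
  fixes C :: "real \<Rightarrow> real" and \<alpha> lam a :: real
    and E :: "real^'n \<Rightarrow> real" and x :: "real^'n" and j :: 'n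
  assumes C_norm: "((\<lambda>\<beta>. C \<beta> * Gamma (1 - \<beta>)) \<longlongrightarrow> 1/2) (at_left 1)"
    and "0 < \<alpha>" and "\<alpha> < 1"
    and E_diff: "\<forall>y. E differentiable (at y)"
    and "a > 0" and "x $ j > a"
    and E_int: "(\<lambda>s. deriv (\<lambda>u. E (coord_upd x j u)) s
                   * (sech ((s - x $ j) / (1 - \<alpha>)))^2) integrable_on {a..x $ j}"
  shows "sigmoidal_frac_deriv C \<alpha> a (\<lambda>u. E_l1 lam E (coord_upd x j u)) (x $ j)
       = sigmoidal_frac_deriv C \<alpha> a (\<lambda>u. E (coord_upd x j u)) (x $ j)
         + lam * C1 C \<alpha> * (\<alpha> - 1) * tanh ((a - x $ j) / (1 - \<alpha>))"
proof -
  define t where "t = x $ j"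
  define g where "g = (\<lambda>u. E (coord_upd x j u))"
  define c where "c = (\<Sum>k\<in>UNIV - {j}. \<bar>x $ k\<bar>)"
  define w where "w = (\<lambda>s. (sech ((s - t) / (1 - \<alpha>)))^2)"
  have f_eq: "(\<lambda>u. E_l1 lam E (coord_upd x j u)) = (\<lambda>u. g u + lam * (\<bar>u\<bar> + c))"
    by (simp add: E_l1_def g_def c_def sum_coord_upd)
  have gd: "g differentiable at s" for s
  proof -
    have "(E \<circ> (\<lambda>u. coord_upd x j u)) differentiable at s"
      by (rule differentiable_chain_at[OF coord_upd_diff]) (use E_diff in auto)
    then show ?thesis by (simp add: g_def comp_def)
  qed
  have dd: "deriv (\<lambda>u. g u + lam * (\<bar>u\<bar> + c)) s = deriv g s + lam" if "s > 0" for s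
  proof -
    have h1: "((\<lambda>u. lam * (u + c)) has_real_derivative lam) (at s)"
      by (auto intro!: derivative_eq_intros)
    have h2: "((\<lambda>u. lam * (\<bar>u\<bar> + c)) has_real_derivative lam) (at s)"
      by (rule has_field_derivative_transform_within_open[OF h1, of "{0<..}"]) (use that in auto)
    have "((\<lambda>u. g u + lam * (\<bar>u\<bar> + c)) has_real_derivative deriv g s + lam) (at s)"
      using DERIV_add[OF gd[unfolded DERIV_deriv_iff_real_differentiable[symmetric]] h2] .
    then show ?thesis by (rule DERIV_imp_deriv)
  qed
  have wint: "(w has_integral ((1 - \<alpha>) * tanh ((t - t) / (1 - \<alpha>)) - (1 - \<alpha>) * tanh ((a - t) / (1 - \<alpha>)))) {a..t}"
    unfolding w_def
    by (rule fundamental_theorem_of_calculus) (use assms sech_tanh_deriv t_def in \<open>auto simp: has_real_derivative_iff_has_vector_derivative[symmetric]\<close>)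
  have wint': "(w has_integral ((\<alpha> - 1) * tanh ((a - t) / (1 - \<alpha>)))) {a..t}"
    using wint by (simp add: algebra_simps)
  have "integral {a..t} (\<lambda>s. deriv (\<lambda>u. g u + lam * (\<bar>u\<bar> + c)) s * w s)
      = integral {a..t} (\<lambda>s. deriv g s * w s + lam * w s)"
    by (rule integral_cong) (use assms t_def dd in \<open>auto simp: algebra_simps\<close>)
  also have "\<dots> = integral {a..t} (\<lambda>s. deriv g s * w s) + lam * ((\<alpha> - 1) * tanh ((a - t) / (1 - \<alpha>)))"
  proof -
    have i1: "(\<lambda>s. deriv g s * w s) integrable_on {a..t}"
      using E_int by (simp add: g_def w_def t_def)
    have "((\<lambda>s. deriv g s * w s + lam * w s) has_integral
          integral {a..t} (\<lambda>s. deriv g s * w s) + lam * ((\<alpha> - 1) * tanh ((a - t) / (1 - \<alpha>)))) {a..t}"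
      by (intro has_integral_add has_integral_mult_right integrable_integral i1 wint')
    then show ?thesis by (rule integral_unique)
  qed
  finally have I: "integral {a..t} (\<lambda>s. deriv (\<lambda>u. g u + lam * (\<bar>u\<bar> + c)) s * w s)
      = integral {a..t} (\<lambda>s. deriv g s * w s) + lam * ((\<alpha> - 1) * tanh ((a - t) / (1 - \<alpha>)))" .
  have "sigmoidal_frac_deriv C \<alpha> a (\<lambda>u. E_l1 lam E (coord_upd x j u)) (x $ j)
      = C1 C \<alpha> * integral {a..t} (\<lambda>s. deriv (\<lambda>u. g u + lam * (\<bar>u\<bar> + c)) s * w s)"
    unfolding sigmoidal_frac_deriv_def f_eq w_def t_def ..
  also have "\<dots> = C1 C \<alpha> * integral {a..t} (\<lambda>s. deriv g s * w s) + lam * C1 C \<alpha> * (\<alpha> - 1) * tanh ((a - t) / (1 - \<alpha>))"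
    unfolding I by (simp add: algebra_simps)
  also have "C1 C \<alpha> * integral {a..t} (\<lambda>s. deriv g s * w s) = sigmoidal_frac_deriv C \<alpha> a (\<lambda>u. E (coord_upd x j u)) (x $ j)"
    unfolding sigmoidal_frac_deriv_def g_def w_def t_def ..
  finally show ?thesis by (simp add: t_def)
qed

end
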